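(* There is a uniform constant $M>0$ such that for every $n\ge1$, every admissible $\boldsymbol\alpha=(\alpha_1,\dots,\alpha_n)$ with inverse branch $h_{\boldsymbol\alpha}=h_{\alpha_1}\circ\dots\circ h_{\alpha_n}$, every unit tangent vector $v$ and every $z\in T^nO_{\boldsymbol\alpha}$, $$|\partial_vJ_{\boldsymbol\alpha}(z)|\le M|J_{\boldsymbol\alpha}(z)|,$$ where $\partial_v$ denotes the directional derivative.
   Context: Fix $d\in\{1,2,3,7,11\}$, $\mathcal O$ the ring of integers of $\mathbb Q(\sqrt{-d})$ ($\mathbb Z[\sqrt{-d}]$ if $d\not\equiv3\bmod4$, $\mathbb Z[\frac{1+\sqrt{-d}}2]$ if $d\equiv3\bmod4$). $I\subset\mathbb C$ is $\{x+iy:|x|\le1/2,|y|\le\sqrt d/2\}$ if $d=1,2$ and $\{x+iy:|x|\le1/2,|y\pm x/\sqrt d|\le\frac{d+1}{4\sqrt d}\}$ if $d=3,7,11$; $I'=I\setminus\bigcup_\beta(I+\beta)$, $\beta\in\{1,\sqrt{-d}\}$ ($d=1,2$) or $\{1,\frac{1\pm\sqrt{-d}}2\}$ ($d=3,7,11$); $[z]\in\mathcal O$ is the unique element with $z-[z]\in I'$. $T(z)=1/z-[1/z]$ ($z\ne0$), $T(0)=0$; digits $\alpha_j(z)=[1/T^{j-1}(z)]$. For $\alpha\in\mathcal O$, $O_\alpha=\{z\in I\setminus\{0\}:[1/z]=\alpha\}$, and for non-empty $O_\alpha$, $h_\alpha:TO_\alpha\to O_\alpha$, $h_\alpha(z)=1/(z+\alpha)$.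 For $\boldsymbol\alpha\in\mathcal O^n$, $O_{\boldsymbol\alpha}=\{z\in I:\alpha_j(z)=\alpha_j,\ j\le n\}$; $\boldsymbol\alpha$ is admissible if $O_{\boldsymbol\alpha}\ne\emptyset$, and then $h_{\boldsymbol\alpha}:T^nO_{\boldsymbol\alpha}\to O_{\boldsymbol\alpha}$. $J_{\boldsymbol\alpha}$ is the Jacobian determinant of $h_{\boldsymbol\alpha}$ viewed as a map of $\mathbb R^2$, i.e. $J_{\boldsymbol\alpha}(z)=|h_{\boldsymbol\alpha}'(z)|^2$. *)

theory Defs
  imports "HOL-Analysis.Analysis"
begin

text \<open>Generator of the ring of integers of Q(sqrt(-d)).\<close>
definition omega_gen :: "nat \<Rightarrow> complex" where
  "omega_gen d = (if d mod 4 = 3 then (1 + \<i> * of_real (sqrt (real d))) / 2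
                  else \<i> * of_real (sqrt (real d)))"

definition ring_O :: "nat \<Rightarrow> complex set" where
  "ring_O d = {of_int a + of_int b * omega_gen d | a b. True}"

definition fund_I :: "nat \<Rightarrow> complex set" where
  "fund_I d = (if d = 1 \<or> d = 2 then
       {z. \<bar>Re z\<bar> \<le> 1/2 \<and> \<bar>Im z\<bar> \<le> sqrt (real d) / 2}
     else
       {z. \<bar>Re z\<bar> \<le> 1/2 \<and>
           \<bar>Im z + Re z / sqrt (real d)\<bar> \<le> (real d + 1) / (4 * sqrt (real d)) \<and>
           \<bar>Im z - Re z / sqrt (real d)\<bar> \<le> (real d + 1) / (4 * sqrt (real d))})"

definition shifts :: "nat \<Rightarrow> complex set" where
  "shifts d = (if d = 1 \<or> d = 2 then {1, \<i> * of_real (sqrt (real d))}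
               else {1, (1 + \<i> * of_real (sqrt (real d))) / 2,
                        (1 - \<i> * of_real (sqrt (real d))) / 2})"

definition fund_I' :: "nat \<Rightarrow> complex set" where
  "fund_I' d = fund_I d - (\<Union>\<beta>\<in>shifts d. (\<lambda>w. w + \<beta>) ` fund_I d)"

definition nint :: "nat \<Rightarrow> complex \<Rightarrow> complex" where
  "nint d z = (THE a. a \<in> ring_O d \<and> z - a \<in> fund_I' d)"

definition Tmap :: "nat \<Rightarrow> complex \<Rightarrow> complex" where
  "Tmap d z = (if z = 0 then 0 else 1 / z - nint d (1 / z))"

definition cyl :: "nat \<Rightarrow> complex list \<Rightarrow> complex set" where
  "cyl d as = {z \<in> fund_I d. \<forall>k < length as.
       (Tmap d ^^ k) z \<noteq> 0 \<and> nint d (1 / (Tmap d ^^ k) z) = as ! k}"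

definition admissible :: "nat \<Rightarrow> complex list \<Rightarrow> bool" where
  "admissible d as \<longleftrightarrow> cyl d as \<noteq> {}"

definition hmap :: "complex \<Rightarrow> complex \<Rightarrow> complex" where
  "hmap a z = 1 / (z + a)"

definition hbranch :: "complex list \<Rightarrow> complex \<Rightarrow> complex" where
  "hbranch as = foldr (\<lambda>a g. hmap a \<circ> g) as id"

text \<open>Jacobian determinant of h_alpha as a map of R^2: |h_alpha'(z)|^2.\<close>
definition Jac :: "complex list \<Rightarrow> complex \<Rightarrow> real" where
  "Jac as z = (cmod (deriv (hbranch as) z))\<^sup>2"

end

theory Submission
  imports Defs
begin

primrec mob :: "complex list \<Rightarrow> complex \<times> complex \<times> complex \<times> complex" where
  "mob [] = (1, 0, 0, 1)"
| "mob (a # bs) = (case mob bs of (p, q, r, s) \<Rightarrow> (r, s, p + a * r, q + a * s))"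

definition mP where "mP as = fst (mob as)"
definition mQ where "mQ as = fst (snd (mob as))"
definition mR where "mR as = fst (snd (snd (mob as)))"
definition mS where "mS as = snd (snd (snd (mob as)))"

lemma mob_simps [simp]:
  "mP [] = 1" "mQ [] = 0" "mR [] = 0" "mS [] = 1"
  "mP (a # bs) = mR bs" "mQ (a # bs) = mS bs"
  "mR (a # bs) = mP bs + a * mR bs" "mS (a # bs) = mQ bs + a * mS bs"
  by (simp_all add: mP_def mQ_def mR_def mS_def split: prod.split)

definition num where "num as w = mP as * w + mQ as"
definition den where "den as w = mR as * w + mS as"

lemma mob_det: "mP as * mS as - mQ as * mR as = (-1) ^ length as"
proof (induction as)
  case Nil then show ?case by simp
next
  case (Cons a bs)
  have "mP (a # bs) * mS (a # bs) - mQ (a # bs) * mR (a # bs)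
      = - (mP bs * mS bs - mQ bs * mR bs)" by (simp add: algebra_simps)
  then show ?case using Cons by simp
qed

lemma hbranch_Nil [simp]: "hbranch [] = id" by (simp add: hbranch_def)
lemma hbranch_Cons [simp]: "hbranch (a # bs) w = 1 / (hbranch bs w + a)"
  by (simp add: hbranch_def hmap_def)

lemma hb_mob:
  assumes "\<forall>k \<le> length as. den (drop k as) w \<noteq> 0"
  shows "hbranch as w = num as w / den as w"
  using assms
proof (induction as)
  case Nil then show ?case by (simp add: num_def den_def)
next
  case (Cons a bs)
  have h: "\<forall>k \<le> length bs. den (drop k bs) w \<noteq> 0"
  proof (intro allI impI)
    fix k assume "k \<le> length bs"
    then show "den (drop k bs) w \<noteq> 0" using Cons.prems[rule_format, of "Suc k"] by simp
  qed
  have u: "den bs w \<noteq> 0" using h by (metis drop0 le0)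
  have u': "den (a # bs) w \<noteq> 0" using Cons.prems[rule_format, of 0] by simp
  have e: "den (a # bs) w = num bs w + a * den bs w" "num (a # bs) w = den bs w"
    by (simp_all add: num_def den_def algebra_simps)
  have hbw: "hbranch bs w = num bs w / den bs w" using Cons.IH[OF h] .
  have "hbranch (a # bs) w = 1 / (num bs w / den bs w + a)" by (simp add: hbw)
  also have "\<dots> = den bs w / (num bs w + a * den bs w)"
    using u u' e by (simp add: field_simps)
  finally show ?case using e by simp
qed

definition KK :: real where "KK = 380 / 39"

lemma chain:
  assumes "\<forall>k < length as. hbranch (drop k as) z \<noteq> 0 \<and> cmod (hbranch (drop k as) z) \<le> 19/20"
  shows "den as z \<noteq> 0 \<and> hbranch as z = num as z / den as z \<and> cmod (1 / den as z) \<le> 1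
     \<and> cmod (mR as / den as z) \<le> KK * (1 - cmod (1 / den as z) ^ 2)"
  using assms
proof (induction as)
  case Nil then show ?case by (simp add: num_def den_def)
next
  case (Cons a bs)
  have h: "\<forall>k < length bs. hbranch (drop k bs) z \<noteq> 0 \<and> cmod (hbranch (drop k bs) z) \<le> 19/20"
  proof (intro allI impI)
    fix k assume "k < length bs"
    then show "hbranch (drop k bs) z \<noteq> 0 \<and> cmod (hbranch (drop k bs) z) \<le> 19/20"
      using Cons.prems[rule_format, of "Suc k"] by simp
  qed
  note IH = Cons.IH[OF h]
  define u where "u = den bs z"
  define y where "y = hbranch bs z"
  define x where "x = hbranch (a # bs) z"
  have x0: "x \<noteq> 0" and xb: "cmod x \<le> 19/20" using Cons.prems[rule_format, of 0] by (auto simp: x_def)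
  have u0: "u \<noteq> 0" using IH by (simp add: u_def)
  have yu: "y = num bs z / u" using IH by (simp add: u_def y_def)
  have xy: "x = 1 / (y + a)" by (simp add: x_def y_def)
  have ya: "y + a \<noteq> 0" using x0 xy by auto
  have u'e: "den (a # bs) z = u * (y + a)"
    using u0 by (simp add: yu u_def num_def den_def field_simps)
  have u'0: "den (a # bs) z \<noteq> 0" using u'e u0 ya by simp
  have inv': "1 / den (a # bs) z = x * (1 / u)" using u'e xy by simp
  have hb: "hbranch (a # bs) z = num (a # bs) z / den (a # bs) z"
  proof -
    have "num (a # bs) z = u" by (simp add: num_def den_def u_def)
    then show ?thesis using u'e xy u0 ya by (simp add: x_def[symmetric] y_def)
  qed
  define eps where "eps = mP bs * mS bs - mQ bs * mR bs"
  have eps1: "cmod eps = 1" using mob_det[of bs] by (simp add: eps_def norm_power)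
  have rho': "mR (a # bs) / den (a # bs) z = mR bs / u + eps * x * (1 / u) ^ 2"
  proof -
    have "mR (a # bs) / den (a # bs) z - mR bs / u = (mP bs - mR bs * y) * x / u"
    proof -
      have q1: "(y + a) * x = 1" using ya xy by simp
      have e1: "mR (a # bs) / den (a # bs) z = (mP bs + a * mR bs) * x / u"
        using u0 ya by (simp add: u'e xy)
      have e2: "mR bs / u = mR bs * ((y + a) * x) / u" using q1 by simp
      show ?thesis unfolding e1 e2 by (simp add: algebra_simps diff_divide_distrib[symmetric])
    qed
    also have "mP bs - mR bs * y = eps / u"
      using u0 by (simp add: yu eps_def num_def u_def den_def field_simps)
    finally show ?thesis by (simp add: field_simps power2_eq_square)
  qed
  define i where "i = cmod (1 / u)"
  have i1: "i \<le> 1" using IH by (simp add: i_def u_def)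
  have rb: "cmod (mR bs / u) \<le> KK * (1 - i ^ 2)" using IH by (simp add: i_def u_def)
  have i'e: "cmod (1 / den (a # bs) z) = cmod x * i" using inv' by (simp add: i_def norm_mult norm_divide)
  have i'le: "cmod (1 / den (a # bs) z) \<le> 19/20 * i"
    unfolding i'e using xb mult_right_mono[OF xb, of i] by (simp add: i_def)
  have i0: "0 \<le> i" by (simp add: i_def)
  have "cmod (mR (a # bs) / den (a # bs) z) \<le> cmod (mR bs / u) + cmod x * i ^ 2"
  proof -
    have "cmod (eps * x * (1/u)^2) = cmod x * i^2" by (simp add: norm_mult norm_power eps1 i_def)
    then show ?thesis unfolding rho' using norm_triangle_ineq[of "mR bs / u" "eps * x * (1/u)^2"] by simp
  qed
  also have "\<dots> \<le> KK * (1 - i ^ 2) + 19/20 * i ^ 2"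
    using rb mult_right_mono[OF xb, of "i^2"] by simp
  also have "\<dots> \<le> KK * (1 - cmod (1 / den (a # bs) z) ^ 2)"
  proof -
    have "cmod (1 / den (a # bs) z) ^ 2 \<le> (19/20 * i) ^ 2"
      using i'le by (intro power_mono) auto
    then have "cmod (1 / den (a # bs) z) ^ 2 \<le> 361/400 * i ^ 2" by (simp add: power_mult_distrib power_divide)
    moreover have "\<And>c j::real. c \<le> 361/400 * j \<Longrightarrow> 380/39 * (1 - j) + 19/20 * j \<le> 380/39 * (1 - c)"
      by (simp add: field_simps)
    ultimately show ?thesis unfolding KK_def by blast
  qed
  finally have "cmod (mR (a # bs) / den (a # bs) z) \<le> KK * (1 - cmod (1 / den (a # bs) z) ^ 2)" .
  moreover have "cmod (1 / den (a # bs) z) \<le> 1" using i'le i1 by linarith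
  ultimately show ?case using u'0 hb by simp
qed

lemma open_all_neq:
  fixes f :: "nat \<Rightarrow> 'a::topological_space \<Rightarrow> complex"
  assumes "\<And>k. continuous_on UNIV (f k)"
  shows "open {x. \<forall>k \<le> n. f k x \<noteq> 0}"
proof -
  have "{x. \<forall>k \<le> n. f k x \<noteq> 0} = (\<Inter>k\<in>{..n}. {x. f k x \<noteq> 0})" by auto
  moreover have "open {x. f k x \<noteq> 0}" for k
    by (rule open_Collect_neq[OF assms]) (rule continuous_on_const)
  ultimately show ?thesis by auto
qed

lemma deriv_aux:
  fixes a b p q :: real
  assumes K: "a^2 + p^2 > 0"
  shows "((\<lambda>t. 1 / ((a + t*b)^2 + (p + t*q)^2)^2) has_real_derivative
           (-4 * (a*b + p*q) / (a^2 + p^2)^3)) (at 0)"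
proof -
  define K where "K = a^2 + p^2"
  have K0: "K > 0" using K by (simp add: K_def)
  show ?thesis
    apply (rule derivative_eq_intros refl)+
    using K0 apply (simp add: K_def[symmetric])
    apply (simp add: K_def[symmetric])
    using K0 apply (simp add: field_simps power2_eq_square power3_eq_cube)
    apply (simp add: algebra_simps power_def)
    done
qed

lemma jac_deriv:
  assumes nz: "\<forall>k \<le> length as. den (drop k as) z \<noteq> 0" and v: "cmod v = 1"
  shows "\<exists>D. ((\<lambda>t. Jac as (z + of_real t * v)) has_real_derivative D) (at 0)
     \<and> \<bar>D\<bar> \<le> 4 * cmod (mR as / den as z) * Jac as z"
proof -
  define U where "U = {w. \<forall>k \<le> length as. den (drop k as) w \<noteq> 0}"
  have oU: "open U" unfolding U_def
    by (rule open_all_neq) (auto simp: den_def intro!: continuous_intros)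
  have hU: "hbranch as w = num as w / den as w" if "w \<in> U" for w
    using hb_mob that by (simp add: U_def)
  define det where "det = mP as * mS as - mQ as * mR as"
  have det1: "cmod det = 1" using mob_det[of as] by (simp add: det_def norm_power)
  have dU: "den as w \<noteq> 0" if "w \<in> U" for w using that by (simp add: U_def) (metis drop0 le0)
  have Jw: "Jac as w = 1 / cmod (den as w) ^ 4" if w: "w \<in> U" for w
  proof -
    have "((\<lambda>w. num as w / den as w) has_field_derivative det / (den as w)^2) (at w)"
      using dU[OF w] unfolding num_def den_def det_def
      by (auto intro!: derivative_eq_intros simp: field_simps power2_eq_square)
    then have "(hbranch as has_field_derivative det / (den as w)^2) (at w)"
      by (rule has_field_derivative_transform_within_open[OF _ oU w]) (simp add: hU)
    then have "deriv (hbranch as) w = det / (den as w)^2" by (rule DERIV_imp_deriv)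
    then show ?thesis by (simp add: Jac_def norm_divide norm_power det1 power_divide flip: power_mult)
  qed
  define u where "u = den as z"
  define c where "c = mR as * v"
  have zU: "z \<in> U" using nz by (simp add: U_def)
  have u0: "u \<noteq> 0" using dU[OF zU] by (simp add: u_def)
  define g where "g t = 1 / ((Re u + t * Re c)^2 + (Im u + t * Im c)^2)^2" for t :: real
  define S where "S = {t::real. \<forall>k \<le> length as. den (drop k as) (z + of_real t * v) \<noteq> 0}"
  have oS: "open S" unfolding S_def
    by (rule open_all_neq) (auto simp: den_def intro!: continuous_intros)
  have 0: "0 \<in> S" using nz by (simp add: S_def)
  have eqS: "g t = Jac as (z + of_real t * v)" if "t \<in> S" for t
  proof -
    have "z + of_real t * v \<in> U" using that by (simp add: S_def U_def)
    moreover have "den as (z + of_real t * v) = u + of_real t * c"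
      by (simp add: u_def c_def den_def algebra_simps)
    moreover have "cmod (u + of_real t * c) ^ 4 = ((Re u + t * Re c)^2 + (Im u + t * Im c)^2)^2"
    proof -
      have "cmod (u + of_real t * c) ^ 4 = (cmod (u + of_real t * c) ^ 2) ^ 2" by simp
      also have "\<dots> = ((Re u + t * Re c)^2 + (Im u + t * Im c)^2)^2" by (simp only: cmod_power2) simp
      finally show ?thesis .
    qed
    ultimately show ?thesis by (simp add: Jw g_def)
  qed
  define Q where "Q = (Re u)^2 + (Im u)^2"
  have Qc: "Q = cmod u ^ 2" by (simp add: Q_def cmod_power2)
  have Q0: "Q > 0" using u0 by (simp add: Qc)
  define D where "D = - 4 * (Re u * Re c + Im u * Im c) / Q ^ 3"
  have "(g has_real_derivative D) (at 0)"
    unfolding g_def D_def Q_def using deriv_aux Q0 Q_def by auto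
  then have der: "((\<lambda>t. Jac as (z + of_real t * v)) has_real_derivative D) (at 0)"
    by (rule has_field_derivative_transform_within_open[OF _ oS 0]) (simp add: eqS)
  have cs: "\<bar>Re u * Re c + Im u * Im c\<bar> \<le> cmod u * cmod c"
  proof -
    have "Re u * Re c + Im u * Im c = Re (u * cnj c)" by simp
    also have "\<bar>\<dots>\<bar> \<le> cmod (u * cnj c)" by (rule abs_Re_le_cmod)
    finally show ?thesis by (simp add: norm_mult)
  qed
  have cc: "cmod c = cmod (mR as)" by (simp add: c_def norm_mult v)
  have Jz: "Jac as z = 1 / cmod u ^ 4" using Jw[OF zU] by (simp add: u_def)
  have "\<bar>D\<bar> = 4 * \<bar>Re u * Re c + Im u * Im c\<bar> / Q ^ 3" using Q0 by (simp add: D_def abs_divide abs_mult abs_minus_commute) (smt (verit) abs_minus_cancel abs_mult_pos)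
  also have "\<dots> \<le> 4 * (cmod u * cmod c) / Q ^ 3"
    using cs Q0 by (intro divide_right_mono) auto
  also have "\<dots> = 4 * cmod (mR as / den as z) * Jac as z"
    using u0 by (simp add: Jz Qc cc norm_divide u_def[symmetric] field_simps) (simp add: power_def)
  finally show ?thesis using der by blast
qed

definition hexP :: "real \<Rightarrow> real \<Rightarrow> real \<Rightarrow> bool" where
 "hexP e X V \<longleftrightarrow> \<bar>X\<bar> \<le> 1/2 \<and> \<bar>V + X\<bar> \<le> e/2 \<and> \<bar>V - X\<bar> \<le> e/2"
definition hexQ :: "real \<Rightarrow> real \<Rightarrow> real \<Rightarrow> bool" where
 "hexQ e X V \<longleftrightarrow> hexP e X V \<and> \<not> hexP e (X - 1) V \<and> \<not> hexP e (X - 1/2) (V - (2*e-1)/2) \<and> \<not> hexP e (X - 1/2) (V + (2*e-1)/2)"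
definition hexH :: "real \<Rightarrow> real \<Rightarrow> real \<Rightarrow> bool" where
 "hexH e X V \<longleftrightarrow> -1/2 \<le> X \<and> X < 1/2 \<and> -e/2 \<le> V + X \<and> V + X < e/2 \<and> -e/2 < V - X \<and> V - X \<le> e/2"

lemma hexH_Q: assumes "e \<ge> 1" "hexH e X V" shows "hexQ e X V"
proof -
  have h: "-1/2 \<le> X" "X < 1/2" "-e/2 \<le> V + X" "V + X < e/2" "-e/2 < V - X" "V - X \<le> e/2"
    using assms(2) by (auto simp: hexH_def)
  have "hexP e X V" unfolding hexP_def abs_le_iff using h assms(1) by (intro conjI; simp add: field_simps)
  moreover have "\<not> hexP e (X - 1) V"
  proof -
    have "\<not> -(X - 1) \<le> 1/2" using h by linarith
    then show ?thesis unfolding hexP_def abs_le_iff by blast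
  qed
  moreover have "\<not> hexP e (X - 1/2) (V - (2*e-1)/2)"
  proof -
    have "V - (2*e-1)/2 + (X - 1/2) = (V + X) - e" by (simp add: field_simps)
    then have "-(V - (2*e-1)/2 + (X - 1/2)) > e/2" using h by (simp add: field_simps)
    then have "\<not> \<bar>V - (2*e-1)/2 + (X - 1/2)\<bar> \<le> e/2" using abs_ge_minus_self[of "V - (2*e-1)/2 + (X - 1/2)"] by linarith
    then show ?thesis unfolding hexP_def by blast
  qed
  moreover have "\<not> hexP e (X - 1/2) (V + (2*e-1)/2)"
  proof -
    have "V + (2*e-1)/2 - (X - 1/2) = (V - X) + e" by (simp add: field_simps)
    then have "V + (2*e-1)/2 - (X - 1/2) > e/2" using h by (simp add: field_simps)
    then have "\<not> \<bar>V + (2*e-1)/2 - (X - 1/2)\<bar> \<le> e/2" using abs_ge_self[of "V + (2*e-1)/2 - (X - 1/2)"] by linarith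
    then show ?thesis unfolding hexP_def by blast
  qed
  ultimately show ?thesis unfolding hexQ_def by blast
qed

lemma hexQ_H: assumes "e \<ge> 1" "hexQ e X V" shows "hexH e X V"
proof -
  have P: "X \<le> 1/2" "-X \<le> 1/2" "V + X \<le> e/2" "-(V + X) \<le> e/2" "V - X \<le> e/2" "-(V - X) \<le> e/2"
  proof -
    have "hexP e X V" using assms(2) unfolding hexQ_def by blast
    then show "X \<le> 1/2" "-X \<le> 1/2" "V + X \<le> e/2" "-(V + X) \<le> e/2" "V - X \<le> e/2" "-(V - X) \<le> e/2"
      unfolding hexP_def abs_le_iff by blast+
  qed
  have n1: "\<not> hexP e (X - 1) V" and n2: "\<not> hexP e (X - 1/2) (V - (2*e-1)/2)"
    and n3: "\<not> hexP e (X - 1/2) (V + (2*e-1)/2)" using assms(2) unfolding hexQ_def by blast+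
  have a: "X < 1/2"
  proof (rule ccontr)
    assume "\<not> X < 1/2"
    then have "X = 1/2" using P by linarith
    then have "hexP e (X - 1) V" using P unfolding hexP_def abs_le_iff by (intro conjI; simp add: field_simps)
    then show False using n1 by simp
  qed
  have b: "V + X < e/2"
  proof (rule ccontr)
    assume "\<not> V + X < e/2"
    then have "V + X = e/2" using P by linarith
    then have "hexP e (X - 1/2) (V - (2*e-1)/2)" using P assms(1) unfolding hexP_def abs_le_iff by (intro conjI; simp add: field_simps)
    then show False using n2 by simp
  qed
  have c: "-e/2 < V - X"
  proof (rule ccontr)
    assume "\<not> -e/2 < V - X"
    then have "V - X = -e/2" using P by linarith
    then have "hexP e (X - 1/2) (V + (2*e-1)/2)" using P assms(1) unfolding hexP_def abs_le_iff by (intro conjI; simp add: field_simps)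
    then show False using n3 by simp
  qed
  show ?thesis using P a b c unfolding hexH_def by (intro conjI; simp add: field_simps)
qed

lemma ex3:
  fixes x0 v0 e :: real
  assumes e: "e \<ge> 1" and "-1/2 \<le> x0" "x0 < 1/2" "0 \<le> v0" "v0 < (2*e-1)/2"
  shows "hexH e x0 v0 \<or> hexH e (x0 - 1/2) (v0 - (2*e-1)/2) \<or> hexH e (x0 + 1/2) (v0 - (2*e-1)/2)"
proof (cases "v0 + x0 < e/2 \<and> v0 - x0 \<le> e/2")
  case True
  then have "hexH e x0 v0" using assms unfolding hexH_def by (intro conjI; simp add: field_simps)
  then show ?thesis by simp
next
  case False
  show ?thesis
  proof (cases "x0 \<ge> 0")
    case True
    have dj: "v0 + x0 \<ge> e/2 \<or> v0 - x0 > e/2" using False by auto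
    have F': "v0 + x0 \<ge> e/2" using dj True by (auto simp: field_simps)
    then have "hexH e (x0 - 1/2) (v0 - (2*e-1)/2)" using assms True unfolding hexH_def by (intro conjI; simp add: field_simps)
    then show ?thesis by simp
  next
    case F2: False
    have dj: "v0 + x0 \<ge> e/2 \<or> v0 - x0 > e/2" using False by auto
    have F': "v0 + x0 \<ge> e/2 - 1" "v0 - x0 > e/2" using dj F2 assms by (auto simp: field_simps)
    then have "hexH e (x0 + 1/2) (v0 - (2*e-1)/2)" using assms F2 unfolding hexH_def by (intro conjI; simp add: field_simps)
    then show ?thesis by simp
  qed
qed

lemma uniqH:
  fixes m n e :: int and x v :: real
  assumes e: "e = 2 \<or> e = 4 \<or> e = 6" and h: "hexH e x v" "hexH e (x - m - n/2) (v - n * (2*e-1)/2)"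
  shows "m = 0 \<and> n = 0"
proof -
  define k1 where "k1 = 2*m + n"
  define k2 where "k2 = m + n * e"
  define k3 where "k3 = n * (e - 1) - m"
  have r: "real_of_int k1 < 2" "real_of_int k1 > -2" "real_of_int k2 < e" "real_of_int k2 > -e"
     "real_of_int k3 < e" "real_of_int k3 > -e"
    using h unfolding hexH_def k1_def k2_def k3_def by (simp_all add: field_simps)
  have i: "k1 < 2" "k1 > -2" "k2 < e" "k2 > -e" "k3 < e" "k3 > -e" using r by linarith+
  from e show ?thesis
  proof (elim disjE)
    assume "e = 2" then show ?thesis using i unfolding k1_def k2_def k3_def by simp
  next
    assume "e = 4" then show ?thesis using i unfolding k1_def k2_def k3_def by simp
  next
    assume "e = 6" then show ?thesis using i unfolding k1_def k2_def k3_def by simp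
  qed
qed
lemma transl_mem: fixes w \<beta> :: complex shows "w \<in> (\<lambda>w. w + \<beta>) ` A \<longleftrightarrow> w - \<beta> \<in> A"
  by (auto simp: image_iff intro!: bexI[where x="w - \<beta>"])

lemma abs_div_aux:
  fixes s y x c :: real
  assumes "s > 0"
  shows "\<bar>y + x / s\<bar> \<le> c / (4 * s) \<longleftrightarrow> \<bar>s * y + x\<bar> \<le> c / 4"
proof -
  have "s * y + x = s * (y + x / s)" using assms by (simp add: field_simps)
  then have "\<bar>s * y + x\<bar> = s * \<bar>y + x / s\<bar>" using assms by (simp add: abs_mult)
  moreover have "c / 4 = s * (c / (4 * s))" using assms by simp
  ultimately show ?thesis using assms by (simp only: mult_le_cancel_left_pos)
qed

lemma hexI:
  assumes d: "d \<in> {3, 7, 11}"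
  shows "w \<in> fund_I d \<longleftrightarrow> hexP ((real d + 1) / 2) (Re w) (sqrt (real d) * Im w)"
proof -
  have s: "sqrt (real d) > 0" using d by auto
  have nd: "\<not> (d = 1 \<or> d = 2)" using d by auto
  have e1: "\<bar>Im w + Re w / sqrt (real d)\<bar> \<le> (real d + 1) / (4 * sqrt (real d)) \<longleftrightarrow>
     \<bar>sqrt (real d) * Im w + Re w\<bar> \<le> (real d + 1) / 4" by (rule abs_div_aux[OF s])
  have e2: "\<bar>Im w - Re w / sqrt (real d)\<bar> \<le> (real d + 1) / (4 * sqrt (real d)) \<longleftrightarrow>
     \<bar>sqrt (real d) * Im w - Re w\<bar> \<le> (real d + 1) / 4"
    using abs_div_aux[OF s, of "Im w" "- Re w"] by simp
  show ?thesis unfolding fund_I_def hexP_def using nd e1 e2 by auto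
qed


lemma omega_hex: "d \<in> {3, 7, 11} \<Longrightarrow> omega_gen d = (1 + \<i> * of_real (sqrt (real d))) / 2"
  by (auto simp: omega_gen_def)

lemma hexI':
  assumes d: "d \<in> {3, 7, 11}"
  shows "w \<in> fund_I' d \<longleftrightarrow> hexQ ((real d + 1) / 2) (Re w) (sqrt (real d) * Im w)"
proof -
  define s where "s = sqrt (real d)"
  have ss: "s * s = real d" using d by (simp add: s_def)
  have nd: "\<not> (d = 1 \<or> d = 2)" using d by auto
  have sh: "shifts d = {1, (1 + \<i> * of_real s) / 2, (1 - \<i> * of_real s) / 2}"
    using nd by (simp add: shifts_def s_def)
  have e: "(2 * ((real d + 1) / 2) - 1) / 2 = real d / 2" by (simp add: field_simps)
  have m1: "w - 1 \<in> fund_I d \<longleftrightarrow> hexP ((real d + 1) / 2) (Re w - 1) (s * Im w)"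
    using hexI[OF d, of "w - 1"] by (simp add: s_def)
  have m2: "w - (1 + \<i> * of_real s) / 2 \<in> fund_I d \<longleftrightarrow> hexP ((real d + 1) / 2) (Re w - 1/2) (s * Im w - real d / 2)"
  proof -
    have "s * Im (w - (1 + \<i> * of_real s) / 2) = s * Im w - real d / 2" using ss by (simp add: algebra_simps)
    then show ?thesis using hexI[OF d, of "w - (1 + \<i> * of_real s) / 2"] by (simp add: s_def)
  qed
  have m3: "w - (1 - \<i> * of_real s) / 2 \<in> fund_I d \<longleftrightarrow> hexP ((real d + 1) / 2) (Re w - 1/2) (s * Im w + real d / 2)"
  proof -
    have "s * Im (w - (1 - \<i> * of_real s) / 2) = s * Im w + real d / 2" using ss by (simp add: algebra_simps)
    then show ?thesis using hexI[OF d, of "w - (1 - \<i> * of_real s) / 2"] by (simp add: s_def)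
  qed
  show ?thesis unfolding fund_I'_def sh hexQ_def e
    using hexI[OF d, of w] m1 m2 m3 by (simp add: transl_mem s_def)
qed


lemma ringO_iff: "a \<in> ring_O d \<longleftrightarrow> (\<exists>m n. a = of_int m + of_int n * omega_gen d)"
  by (auto simp: ring_O_def)

lemma hex_ex1:
  assumes d: "d \<in> {3, 7, 11}"
  shows "\<exists>!a. a \<in> ring_O d \<and> w - a \<in> fund_I' d"
proof -
  define s where "s = sqrt (real d)"
  have ss: "s * s = real d" using d by (simp add: s_def)
  define \<omega> where "\<omega> = omega_gen d"
  have om: "\<omega> = (1 + \<i> * of_real s) / 2" using omega_hex[OF d] by (simp add: \<omega>_def s_def)
  define e :: int where "e = (int d + 1) div 2"
  have ecases: "e = 2 \<or> e = 4 \<or> e = 6" using d by (auto simp: e_def)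
  have ed: "real d = 2 * real_of_int e - 1" using d by (auto simp: e_def)
  have re: "(real d + 1) / 2 = real_of_int e" using ed by simp
  have e1: "real_of_int e \<ge> 1" using ecases by auto
  define X where "X = Re w"
  define V where "V = s * Im w"
  define q where "q = (2 * real_of_int e - 1) / 2"
  have q0: "q > 0" using e1 by (simp add: q_def)
  have memL: "w - (of_int m + of_int n * \<omega>) \<in> fund_I' d \<longleftrightarrow>
      hexQ (real_of_int e) (X - m - n/2) (V - n * q)" for m n :: int
  proof -
    have a1: "Re (w - (of_int m + of_int n * \<omega>)) = X - m - n/2" by (simp add: om X_def)
    have a2: "s * Im (w - (of_int m + of_int n * \<omega>)) = V - n * q"
    proof -
      have "s * Im (w - (of_int m + of_int n * \<omega>)) = s * Im w - n * (s * s) / 2" by (simp add: om algebra_simps)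
      then show ?thesis using ss ed by (simp add: V_def q_def)
    qed
    show ?thesis using hexI'[OF d, of "w - (of_int m + of_int n * \<omega>)"]
      unfolding re s_def[symmetric] a1 a2 .
  qed
  have hc: "hexH E A B \<Longrightarrow> A = A' \<Longrightarrow> B = B' \<Longrightarrow> hexH E A' B'" for E A B A' B' by simp
  show ?thesis
  proof (rule ex_ex1I)
    define n0 where "n0 = \<lfloor>V / q\<rfloor>"
    define v0 where "v0 = V - n0 * q"
    have "n0 \<le> V / q" "V / q < n0 + 1" unfolding n0_def by linarith+
    then have "n0 * q \<le> V" "V < (n0 + 1) * q" using q0 by (simp_all add: field_simps)
    then have v0: "0 \<le> v0" "v0 < q" by (simp_all add: v0_def algebra_simps)
    define m0 where "m0 = \<lfloor>X - n0/2 + 1/2\<rfloor>"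
    define x0 where "x0 = X - m0 - n0/2"
    have x0: "-1/2 \<le> x0" "x0 < 1/2" unfolding x0_def m0_def by linarith+
    have "hexH e x0 v0 \<or> hexH e (x0 - 1/2) (v0 - q) \<or> hexH e (x0 + 1/2) (v0 - q)"
      using ex3[OF e1 x0 v0(1)] v0(2) by (simp add: q_def)
    then show "\<exists>a. a \<in> ring_O d \<and> w - a \<in> fund_I' d"
    proof (elim disjE)
      assume h: "hexH e x0 v0"
      have "w - (of_int m0 + of_int n0 * \<omega>) \<in> fund_I' d"
        unfolding memL by (rule hexH_Q[OF e1], rule hc[OF h]) (simp_all add: x0_def v0_def)
      then show ?thesis unfolding ringO_iff \<omega>_def by blast
    next
      assume h: "hexH e (x0 - 1/2) (v0 - q)"
      have "w - (of_int m0 + of_int (n0 + 1) * \<omega>) \<in> fund_I' d"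
        unfolding memL by (rule hexH_Q[OF e1], rule hc[OF h]) (simp_all add: x0_def v0_def algebra_simps)
      then show ?thesis unfolding ringO_iff \<omega>_def by blast
    next
      assume h: "hexH e (x0 + 1/2) (v0 - q)"
      have "w - (of_int (m0 - 1) + of_int (n0 + 1) * \<omega>) \<in> fund_I' d"
        unfolding memL by (rule hexH_Q[OF e1], rule hc[OF h]) (simp_all add: x0_def v0_def algebra_simps add_divide_distrib)
      then show ?thesis unfolding ringO_iff \<omega>_def by blast
    qed
  next
    fix a b assume A: "a \<in> ring_O d \<and> w - a \<in> fund_I' d" and B: "b \<in> ring_O d \<and> w - b \<in> fund_I' d"
    obtain m n where a: "a = of_int m + of_int n * \<omega>" using A unfolding ringO_iff \<omega>_def by blast
    obtain m' n' where b: "b = of_int m' + of_int n' * \<omega>" using B unfolding ringO_iff \<omega>_def by blast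
    have ha: "hexH e (X - m - n/2) (V - n * q)" using A a memL hexQ_H[OF e1] by blast
    have hb: "hexH e (X - m' - n'/2) (V - n' * q)" using B b memL hexQ_H[OF e1] by blast
    have hb': "hexH e ((X - m - n/2) - of_int (m' - m) - of_int (n' - n)/2) ((V - n * q) - real_of_int ((n' - n) * (2*e-1))/2)"
      by (rule hc[OF hb]) (simp_all add: q_def algebra_simps add_divide_distrib diff_divide_distrib)
    have "m' - m = 0 \<and> n' - n = 0" by (rule uniqH[OF ecases ha hb'])
    then show "a = b" using a b by simp
  qed
qed


lemma sq_ex1:
  assumes d: "d = 1 \<or> d = 2"
  shows "\<exists>!a. a \<in> ring_O d \<and> w - a \<in> fund_I' d"
proof -
  define s where "s = sqrt (real d)"
  have s0: "s > 0" using d by (auto simp: s_def)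
  define \<omega> where "\<omega> = omega_gen d"
  have om: "\<omega> = \<i> * of_real s" using d by (auto simp: \<omega>_def omega_gen_def s_def)
  have memI: "z \<in> fund_I d \<longleftrightarrow> \<bar>Re z\<bar> \<le> 1/2 \<and> \<bar>Im z\<bar> \<le> s/2" for z
    using d by (auto simp: fund_I_def s_def)
  have sh: "shifts d = {1, \<i> * of_real s}" using d by (auto simp: shifts_def s_def)
  have memI': "z \<in> fund_I' d \<longleftrightarrow> -1/2 \<le> Re z \<and> Re z < 1/2 \<and> -s/2 \<le> Im z \<and> Im z < s/2" for z
  proof -
    have "z \<in> fund_I' d \<longleftrightarrow> (\<bar>Re z\<bar> \<le> 1/2 \<and> \<bar>Im z\<bar> \<le> s/2) \<and>
       \<not> (\<bar>Re z - 1\<bar> \<le> 1/2 \<and> \<bar>Im z\<bar> \<le> s/2) \<and> \<not> (\<bar>Re z\<bar> \<le> 1/2 \<and> \<bar>Im z - s\<bar> \<le> s/2)"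
      unfolding fund_I'_def sh by (simp add: transl_mem memI)
    also have "\<dots> \<longleftrightarrow> -1/2 \<le> Re z \<and> Re z < 1/2 \<and> -s/2 \<le> Im z \<and> Im z < s/2"
      using s0 by (auto simp: abs_le_iff)
    finally show ?thesis .
  qed
  have memL: "w - (of_int m + of_int n * \<omega>) \<in> fund_I' d \<longleftrightarrow>
     -1/2 \<le> Re w - m \<and> Re w - m < 1/2 \<and> -s/2 \<le> Im w - n * s \<and> Im w - n * s < s/2" for m n :: int
    unfolding memI' by (simp add: om)
  show ?thesis
  proof (rule ex_ex1I)
    define m where "m = \<lfloor>Re w + 1/2\<rfloor>"
    define n where "n = \<lfloor>Im w / s + 1/2\<rfloor>"
    have "n \<le> Im w / s + 1/2" "Im w / s + 1/2 < n + 1" unfolding n_def by linarith+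
    then have "n * s \<le> Im w + s/2" "Im w + s/2 < (n + 1) * s" using s0 by (simp_all add: field_simps)
    moreover have "m \<le> Re w + 1/2" "Re w + 1/2 < m + 1" unfolding m_def by linarith+
    ultimately have "w - (of_int m + of_int n * \<omega>) \<in> fund_I' d" unfolding memL by (simp add: algebra_simps)
    then show "\<exists>a. a \<in> ring_O d \<and> w - a \<in> fund_I' d" unfolding ringO_iff \<omega>_def by blast
  next
    fix a b assume A: "a \<in> ring_O d \<and> w - a \<in> fund_I' d" and B: "b \<in> ring_O d \<and> w - b \<in> fund_I' d"
    obtain m n where a: "a = of_int m + of_int n * \<omega>" using A unfolding ringO_iff \<omega>_def by blast
    obtain m' n' where b: "b = of_int m' + of_int n' * \<omega>" using B unfolding ringO_iff \<omega>_def by blast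
    have ha: "-1/2 \<le> Re w - m \<and> Re w - m < 1/2 \<and> -s/2 \<le> Im w - n * s \<and> Im w - n * s < s/2"
      using A a memL by blast
    have hb: "-1/2 \<le> Re w - m' \<and> Re w - m' < 1/2 \<and> -s/2 \<le> Im w - n' * s \<and> Im w - n' * s < s/2"
      using B b memL by blast
    have "real_of_int (m - m') < 1" "real_of_int (m - m') > -1" using ha hb by auto
    then have mm: "m = m'" by linarith
    have "real_of_int (n - n') * s < 1 * s" "real_of_int (n - n') * s > (-1) * s" using ha hb
      by (auto simp: algebra_simps)
    then have "real_of_int (n - n') < 1" "real_of_int (n - n') > -1" using s0
      by (meson mult_less_cancel_right_pos)+
    then have "n = n'" by linarith
    then show "a = b" using a b mm by simp
  qed
qed

lemma nint_spec:
  assumes d: "d \<in> {1, 2, 3, 7, 11}"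
  shows "nint d w \<in> ring_O d \<and> w - nint d w \<in> fund_I' d"
proof -
  have "\<exists>!a. a \<in> ring_O d \<and> w - a \<in> fund_I' d"
  proof (cases "d = 1 \<or> d = 2")
    case True then show ?thesis by (rule sq_ex1)
  next
    case False then have "d \<in> {3, 7, 11}" using d by auto
    then show ?thesis by (rule hex_ex1)
  qed
  then show ?thesis unfolding nint_def by (rule theI')
qed

lemma Tmap_in_I:
  assumes d: "d \<in> {1, 2, 3, 7, 11}"
  shows "Tmap d y \<in> fund_I d"
proof (cases "y = 0")
  case True
  have "0 \<in> fund_I d" using d by (auto simp: fund_I_def)
  then show ?thesis using True by (simp add: Tmap_def)
next
  case False
  then show ?thesis using nint_spec[OF d, of "1 / y"] by (simp add: Tmap_def fund_I'_def)
qed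


lemma rad:
  assumes d: "d \<in> {1, 2, 3, 7, 11}" and x: "x \<in> fund_I d"
  shows "cmod x \<le> 19/20"
proof -
  define s where "s = sqrt (real d)"
  have s0: "s > 0" using d by (auto simp: s_def)
  have ss: "s * s = real d" using d by (simp add: s_def)
  have c2: "(cmod x)^2 = (Re x)^2 + (Im x)^2" by (rule cmod_power2)
  have "(cmod x)^2 \<le> (19/20)^2"
  proof (cases "d = 1 \<or> d = 2")
    case True
    then have h: "\<bar>Re x\<bar> \<le> 1/2" "\<bar>Im x\<bar> \<le> s/2" using x by (auto simp: fund_I_def s_def)
    have "(Re x)^2 \<le> (1/2)^2" using h(1) abs_le_square_iff[of "Re x" "1/2"] by simp
    moreover have "(Im x)^2 \<le> (s/2)^2" using h(2) s0 abs_le_square_iff[of "Im x" "s/2"] by simp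
    moreover have "(s/2)^2 = real d / 4" using ss by (simp add: power2_eq_square)
    ultimately have "(Re x)^2 \<le> 1/4" "(Im x)^2 \<le> real d / 4" by (simp_all add: power_divide)
    moreover have "real d \<le> 2" using True by auto
    moreover have "(19/20::real)^2 = 361/400" by (simp add: power_divide)
    ultimately show ?thesis unfolding c2 by linarith
  next
    case False
    then have d3: "d \<in> {3, 7, 11}" using d by auto
    define c where "c = (real d + 1) / 4"
    define V where "V = s * Im x"
    define t where "t = \<bar>Re x\<bar>"
    have h: "\<bar>Re x\<bar> \<le> 1/2" "\<bar>V + Re x\<bar> \<le> c" "\<bar>V - Re x\<bar> \<le> c"
      using x hexI[OF d3, of x] by (auto simp: hexP_def s_def V_def c_def)
    have t: "0 \<le> t" "t \<le> 1/2" using h(1) by (auto simp: t_def)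
    have "\<bar>V\<bar> \<le> c - t" using h unfolding t_def by (auto simp: abs_le_iff abs_if)
    then have "V^2 \<le> (c - t)^2" by (metis abs_le_square_iff abs_of_nonneg abs_ge_zero order.trans)
    moreover have "V^2 = real d * (Im x)^2" using ss by (simp add: V_def power2_eq_square)
    moreover have "(Re x)^2 = t^2" by (simp add: t_def)
    ultimately have "real d * ((cmod x)^2) \<le> real d * t^2 + (c - t)^2" unfolding c2 by (simp add: algebra_simps)
    also have "\<dots> = (real d + 1) * (t * (t - 1/2)) + c^2" by (simp add: c_def power2_eq_square algebra_simps)
    also have "\<dots> \<le> c^2"
    proof -
      have "t * (t - 1/2) \<le> 0" using t by (simp add: mult_nonneg_nonpos)
      then show ?thesis by (simp add: mult_nonneg_nonpos)
    qed
    also have "\<dots> \<le> real d * (19/20)^2" using d3 by (auto simp: c_def power2_eq_square)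
    finally show ?thesis using d3 by auto
  qed
  then show ?thesis by (rule power2_le_imp_le) simp
qed

lemma hb_T:
  "(\<forall>j<length bs. (Tmap d ^^ j) y \<noteq> 0 \<and> nint d (1 / (Tmap d ^^ j) y) = bs ! j)
    \<Longrightarrow> hbranch bs ((Tmap d ^^ length bs) y) = y"
proof (induction bs arbitrary: y)
  case Nil then show ?case by simp
next
  case (Cons b cs)
  have "\<forall>j<length cs. (Tmap d ^^ j) (Tmap d y) \<noteq> 0 \<and> nint d (1 / (Tmap d ^^ j) (Tmap d y)) = cs ! j"
  proof (intro allI impI)
    fix j assume "j < length cs"
    then show "(Tmap d ^^ j) (Tmap d y) \<noteq> 0 \<and> nint d (1 / (Tmap d ^^ j) (Tmap d y)) = cs ! j"
      using Cons.prems[rule_format, of "Suc j"] by (simp add: funpow_Suc_right del: funpow.simps)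
  qed
  note IH = Cons.IH[OF this]
  have y0: "y \<noteq> 0" and nb: "nint d (1 / y) = b" using Cons.prems[rule_format, of 0] by auto
  have "(Tmap d ^^ length (b # cs)) y = (Tmap d ^^ length cs) (Tmap d y)"
    by (simp add: funpow_Suc_right del: funpow.simps)
  then have "hbranch (b # cs) ((Tmap d ^^ length (b # cs)) y) = 1 / (Tmap d y + b)" using IH by simp
  also have "\<dots> = y" using y0 nb by (simp add: Tmap_def)
  finally show ?case .
qed

theorem proposition2p4:
  fixes d :: nat
  assumes "d \<in> {1, 2, 3, 7, 11}"
  shows "\<exists>M > 0. \<forall>as z v.
           length as \<ge> 1 \<and> admissible d as \<and>
           z \<in> (Tmap d ^^ length as) ` cyl d as \<and> cmod v = 1 \<longrightarrow>
           (\<exists>D. ((\<lambda>t. Jac as (z + of_real t * v)) has_real_derivative D) (at 0) \<and>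
                \<bar>D\<bar> \<le> M * \<bar>Jac as z\<bar>)"
proof (rule exI[of _ 40], intro conjI allI impI)
  show "(40::real) > 0" by simp
  fix as z v
  assume H: "length as \<ge> 1 \<and> admissible d as \<and> z \<in> (Tmap d ^^ length as) ` cyl d as \<and> cmod v = 1"
  then obtain x0 where x0: "x0 \<in> cyl d as" and z: "z = (Tmap d ^^ length as) x0" by blast
  have v: "cmod v = 1" using H by blast
  have x0I: "x0 \<in> fund_I d" and cy: "\<forall>k < length as. (Tmap d ^^ k) x0 \<noteq> 0 \<and> nint d (1 / (Tmap d ^^ k) x0) = as ! k"
    using x0 by (auto simp: cyl_def)
  have TI: "(Tmap d ^^ k) x0 \<in> fund_I d" for k
  proof (cases k)
    case 0 then show ?thesis using x0I by simp
  next
    case (Suc j) then show ?thesis using Tmap_in_I[OF assms] by simp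
  qed
  have hbk: "hbranch (drop k as) z = (Tmap d ^^ k) x0" if k: "k \<le> length as" for k
  proof -
    have "\<forall>j<length (drop k as). (Tmap d ^^ j) ((Tmap d ^^ k) x0) \<noteq> 0 \<and>
        nint d (1 / (Tmap d ^^ j) ((Tmap d ^^ k) x0)) = drop k as ! j"
    proof (intro allI impI)
      fix j assume "j < length (drop k as)"
      then have "j + k < length as" by simp
      then show "(Tmap d ^^ j) ((Tmap d ^^ k) x0) \<noteq> 0 \<and>
        nint d (1 / (Tmap d ^^ j) ((Tmap d ^^ k) x0)) = drop k as ! j"
        using cy[rule_format, of "j + k"] k by (simp add: funpow_add add.commute)
    qed
    from hb_T[OF this] have "hbranch (drop k as) ((Tmap d ^^ length (drop k as)) ((Tmap d ^^ k) x0)) = (Tmap d ^^ k) x0" .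
    moreover have "(Tmap d ^^ length (drop k as)) ((Tmap d ^^ k) x0) = z"
    proof -
      have "(Tmap d ^^ (length as - k)) ((Tmap d ^^ k) x0) = (Tmap d ^^ (length as - k + k)) x0"
        by (simp add: funpow_add)
      then show ?thesis using k by (simp add: z)
    qed
    ultimately show ?thesis by simp
  qed
  have Hk: "\<forall>j < length (drop k as). hbranch (drop j (drop k as)) z \<noteq> 0 \<and> cmod (hbranch (drop j (drop k as)) z) \<le> 19/20"
    if k: "k \<le> length as" for k
  proof (intro allI impI)
    fix j assume j: "j < length (drop k as)"
    then have "hbranch (drop j (drop k as)) z = (Tmap d ^^ (j + k)) x0" using hbk[of "j + k"] by simp
    then show "hbranch (drop j (drop k as)) z \<noteq> 0 \<and> cmod (hbranch (drop j (drop k as)) z) \<le> 19/20"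
      using cy[rule_format, of "j + k"] j rad[OF assms TI[of "j + k"]] by simp
  qed
  have nz: "\<forall>k \<le> length as. den (drop k as) z \<noteq> 0"
    using chain[OF Hk] by blast
  have ch: "cmod (mR as / den as z) \<le> KK * (1 - cmod (1 / den as z) ^ 2)"
    using chain[OF Hk[of 0]] by simp
  have "KK * (1 - cmod (1 / den as z) ^ 2) \<le> KK" by (simp add: KK_def)
  with ch have rK: "cmod (mR as / den as z) \<le> KK" by linarith
  obtain D where D: "((\<lambda>t. Jac as (z + of_real t * v)) has_real_derivative D) (at 0)"
    and Db: "\<bar>D\<bar> \<le> 4 * cmod (mR as / den as z) * Jac as z"
    using jac_deriv[OF nz v] by blast
  have J0: "Jac as z \<ge> 0" by (simp add: Jac_def)
  have "4 * cmod (mR as / den as z) * Jac as z \<le> 4 * KK * Jac as z"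
    using rK J0 by (simp add: mult_right_mono)
  also have "\<dots> \<le> 40 * \<bar>Jac as z\<bar>" using J0 by (simp add: KK_def mult_right_mono)
  finally have "4 * cmod (mR as / den as z) * Jac as z \<le> 40 * \<bar>Jac as z\<bar>" .
  then have "\<bar>D\<bar> \<le> 40 * \<bar>Jac as z\<bar>" using Db by linarith
  then show "\<exists>D. ((\<lambda>t. Jac as (z + of_real t * v)) has_real_derivative D) (at 0) \<and> \<bar>D\<bar> \<le> 40 * \<bar>Jac as z\<bar>"
    using D by blast
qed

end
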